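(* Let $\mathcal F=\{F^c_{t,k}\}$ be an F-system and $R,\lambda$ reals such that $|F^A_t\cup F^B_t|\le Rt+\lambda$ for every positive integer $t$. Then for every even positive integer $t$, $$|S_{2t}\cup Z_{3t,2t}|\ge 2\,|S_t\cup Z_{3t/2,t}|+(10-7R)t-3\lambda.$$
   Context: F-system: a family $\mathcal F=\{F^c_{t,k}\}$ of sets of positive integers, indexed by $c\in\{A,B\}$ and integers $0<k\le t$, such that (F1) $|F^c_{t,k}|\ge k$ for all $c,t,k$; and (F2) $F^A_{t,k}\cap F^B_{t',k'}=\emptyset$ for all $k\le t$, $k'\le t'$ with $k+k'\le\max(t,t')$. Notation: $F^c_t=\bigcup_{0<\kappa\le\tau\le t}F^c_{\tau,\kappa}$ for $c\in\{A,B\}$; $S_t=F^A_t\cap F^B_t$; for even $t$, $Z_{3t/2,t}=F^A_{3t/2,t}\cap F^B_{3t/2,t}$ (so also $Z_{3t,2t}=F^A_{3t,2t}\cap F^B_{3t,2t}$). *)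

theory Defs
  imports Complex_Main
begin

text \<open>An F-system is given by two families FA, FB :: nat => nat => nat set,
  FA t k standing for F^A_{t,k} and FB t k for F^B_{t,k}; only indices with
  0 < k <= t are meaningful.  Sets may a priori be infinite; (F1) says
  |F| >= k, which holds automatically for infinite sets.\<close>

definition F_system :: "(nat \<Rightarrow> nat \<Rightarrow> nat set) \<Rightarrow> (nat \<Rightarrow> nat \<Rightarrow> nat set) \<Rightarrow> bool" where
  "F_system FA FB \<longleftrightarrow>
     (\<forall>t k. 0 < k \<and> k \<le> t \<longrightarrow> 0 \<notin> FA t k \<and> 0 \<notin> FB t k) \<and>
     (\<forall>t k. 0 < k \<and> k \<le> t \<longrightarrow>
        (finite (FA t k) \<longrightarrow> k \<le> card (FA t k)) \<and>
        (finite (FB t k) \<longrightarrow> k \<le> card (FB t k))) \<and>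
     (\<forall>t k t' k'. 0 < k \<and> k \<le> t \<and> 0 < k' \<and> k' \<le> t' \<and> k + k' \<le> max t t' \<longrightarrow>
        FA t k \<inter> FB t' k' = {})"

definition Fupto :: "(nat \<Rightarrow> nat \<Rightarrow> nat set) \<Rightarrow> nat \<Rightarrow> nat set" where
  "Fupto F t = (\<Union>\<tau>\<in>{1..t}. \<Union>\<kappa>\<in>{1..\<tau>}. F \<tau> \<kappa>)"

definition Sset :: "(nat \<Rightarrow> nat \<Rightarrow> nat set) \<Rightarrow> (nat \<Rightarrow> nat \<Rightarrow> nat set) \<Rightarrow> nat \<Rightarrow> nat set" where
  "Sset FA FB t = Fupto FA t \<inter> Fupto FB t"

definition Zset :: "(nat \<Rightarrow> nat \<Rightarrow> nat set) \<Rightarrow> (nat \<Rightarrow> nat \<Rightarrow> nat set) \<Rightarrow> nat \<Rightarrow> nat \<Rightarrow> nat set" where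
  "Zset FA FB s k = FA s k \<inter> FB s k"

end

theory Submission
  imports Defs
begin

lemma Fupto_mem: "x \<in> Fupto F s \<longleftrightarrow> (\<exists>a b. 1 \<le> a \<and> a \<le> s \<and> 1 \<le> b \<and> b \<le> a \<and> x \<in> F a b)"
  unfolding Fupto_def by (simp add: Bex_def)

lemma Fupto_mono: "s \<le> s' \<Longrightarrow> Fupto F s \<subseteq> Fupto F s'"
  unfolding subset_iff Fupto_mem by (meson order.trans)

lemma Fupto_sub: "1 \<le> b \<Longrightarrow> b \<le> a \<Longrightarrow> a \<le> s \<Longrightarrow> F a b \<subseteq> Fupto F s"
  unfolding subset_iff Fupto_mem by (meson order.trans)

lemma disj:
  assumes "F_system FA FB" "0 < k" "k \<le> a" "0 < k'" "k' \<le> a'" "k + k' \<le> max a a'"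
    "x \<in> FA a k" "x \<in> FB a' k'"
  shows False
  using assms unfolding F_system_def by blast

lemma cardlow:
  assumes "F_system FA FB" "0 < k" "k \<le> a" "finite (FA a k)" "finite (FB a k)"
  shows "k \<le> card (FA a k)" "k \<le> card (FB a k)"
  using assms unfolding F_system_def by blast+

theorem mainTheorem9:
  fixes FA FB :: "nat \<Rightarrow> nat \<Rightarrow> nat set" and R lam :: real
  assumes "F_system FA FB"
    and "\<And>t. 0 < t \<Longrightarrow> finite (Fupto FA t \<union> Fupto FB t) \<and>
             real (card (Fupto FA t \<union> Fupto FB t)) \<le> R * real t + lam"
    and "0 < t" and "even t"
  shows "real (card (Sset FA FB (2*t) \<union> Zset FA FB (3*t) (2*t)))
         \<ge> 2 * real (card (Sset FA FB t \<union> Zset FA FB (3*t div 2) t)) + (10 - 7*R) * real t - 3*lam"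
proof -
  note FS = assms(1)
  define h where "h = 3*t div 2"
  have ht: "t \<le> h" "h \<le> 2*t" using assms(3) unfolding h_def by auto
  define X where "X = Sset FA FB t \<union> Zset FA FB h t"
  define Z where "Z = Zset FA FB (3*t) (2*t)"
  define W where "W = Sset FA FB (2*t) \<union> Z"
  define U2 where "U2 = Fupto FA (2*t) \<union> Fupto FB (2*t)"
  define U3 where "U3 = Fupto FA (3*t) \<union> Fupto FB (3*t)"
  define M1 where "M1 = FA (2*t) t \<inter> Fupto FB (2*t)"
  define M2 where "M2 = FB (2*t) t \<inter> Fupto FA (2*t)"
  have fU2: "finite U2" and bU2: "real (card U2) \<le> R * real (2*t) + lam"
    using assms(2)[of "2*t"] assms(3) unfolding U2_def by auto
  have fU3: "finite U3" and bU3: "real (card U3) \<le> R * real (3*t) + lam"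
    using assms(2)[of "3*t"] assms(3) unfolding U3_def by auto
  have t1: "1 \<le> t" using assms(3) by simp
  have XA: "\<exists>a b. 0 < b \<and> b \<le> a \<and> a \<le> 2*t \<and> b \<le> t \<and> x \<in> FA a b" if "x \<in> X" for x
  proof -
    from that consider "x \<in> Fupto FA t" | "x \<in> FA h t"
      unfolding X_def Sset_def Zset_def by blast
    then show ?thesis
    proof cases
      case 1 then show ?thesis unfolding Fupto_mem
        by (metis le_trans less_one not_le mult_2 le_add1)
    next
      case 2 then show ?thesis using ht t1 by (intro exI[of _ h] exI[of _ t]) auto
    qed
  qed
  have XB: "\<exists>a b. 0 < b \<and> b \<le> a \<and> a \<le> 2*t \<and> b \<le> t \<and> x \<in> FB a b" if "x \<in> X" for x
  proof -
    from that consider "x \<in> Fupto FB t" | "x \<in> FB h t"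
      unfolding X_def Sset_def Zset_def by blast
    then show ?thesis
    proof cases
      case 1 then show ?thesis unfolding Fupto_mem
        by (metis le_trans less_one not_le mult_2 le_add1)
    next
      case 2 then show ?thesis using ht t1 by (intro exI[of _ h] exI[of _ t]) auto
    qed
  qed
  have XA3: "x \<notin> FB (3*t) (2*t)" "x \<notin> FB (2*t) t" if xX: "x \<in> X" for x
  proof -
    obtain a b where ab: "0 < b" "b \<le> a" "a \<le> 2*t" "b \<le> t" "x \<in> FA a b" using XA[OF xX] by blast
    show "x \<notin> FB (3*t) (2*t)"
      using disj[OF FS ab(1,2), of "2*t" "3*t" x] ab t1 by auto
    show "x \<notin> FB (2*t) t"
      using disj[OF FS ab(1,2), of "t" "2*t" x] ab t1 by auto
  qed
  have XB3: "x \<notin> FA (3*t) (2*t)" "x \<notin> FA (2*t) t" if xX: "x \<in> X" for x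
  proof -
    obtain a b where ab: "0 < b" "b \<le> a" "a \<le> 2*t" "b \<le> t" "x \<in> FB a b" using XB[OF xX] by blast
    show "x \<notin> FA (3*t) (2*t)"
      using disj[OF FS _ _ ab(1,2), of "2*t" "3*t" x] ab t1 by auto
    show "x \<notin> FA (2*t) t"
      using disj[OF FS _ _ ab(1,2), of "t" "2*t" x] ab t1 by auto
  qed
  have ZM: "x \<notin> FA (2*t) t" "x \<notin> FB (2*t) t" if "x \<in> Z" for x
  proof -
    show "x \<notin> FA (2*t) t"
      using that disj[OF FS, of t "2*t" "2*t" "3*t" x] t1 unfolding Z_def Zset_def by auto
    show "x \<notin> FB (2*t) t"
      using that disj[OF FS, of "2*t" "3*t" t "2*t" x] t1 unfolding Z_def Zset_def by auto
  qed
  have M12: "FA (2*t) t \<inter> FB (2*t) t = {}"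
    using disj[OF FS, of t "2*t" t "2*t"] t1 by auto
  have AFu: "FA (2*t) t \<subseteq> Fupto FA (2*t)" "FB (2*t) t \<subseteq> Fupto FB (2*t)"
    using Fupto_sub[of t "2*t" "2*t"] t1 by auto
  have A3: "FA (3*t) (2*t) \<subseteq> U3" "FB (3*t) (2*t) \<subseteq> U3"
    using Fupto_sub[of "2*t" "3*t" "3*t"] t1 unfolding U3_def by auto
  have XS: "X \<subseteq> Sset FA FB (2*t)"
  proof -
    have "Sset FA FB t \<subseteq> Sset FA FB (2*t)" unfolding Sset_def using Fupto_mono[of t "2*t"] by auto
    moreover have "Zset FA FB h t \<subseteq> Sset FA FB (2*t)"
      unfolding Sset_def Zset_def using Fupto_sub[of t h "2*t"] ht t1 by blast
    ultimately show ?thesis unfolding X_def by blast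
  qed
  have XW: "X \<subseteq> W" using XS unfolding W_def by blast
  have XU3: "X \<subseteq> U3"
  proof -
    have "Sset FA FB (2*t) \<subseteq> U3" unfolding Sset_def U3_def using Fupto_mono[of "2*t" "3*t"] by auto
    then show ?thesis using XS by auto
  qed
  have MW: "M1 \<subseteq> W" "M2 \<subseteq> W" unfolding M1_def M2_def W_def Sset_def using AFu by auto
  have ZW: "Z \<subseteq> W" unfolding W_def by auto
  have WU3: "W \<subseteq> U3" using XU3 A3 unfolding W_def Z_def Zset_def Sset_def U3_def
    using Fupto_mono[of "2*t" "3*t" FA] Fupto_mono[of "2*t" "3*t" FB] by auto
  have fW: "finite W" using WU3 fU3 finite_subset by auto
  have fX: "finite X" using XW fW by (rule finite_subset)
  have fZ: "finite Z" using ZW fW by (rule finite_subset)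
  have fM1: "finite M1" using MW(1) fW by (rule finite_subset)
  have fM2: "finite M2" using MW(2) fW by (rule finite_subset)
  have dj1: "X \<inter> Z = {}" using XA3(1) unfolding Z_def Zset_def by blast
  have dj2: "X \<inter> M1 = {}" using XB3(2) unfolding M1_def by blast
  have dj3: "X \<inter> M2 = {}" using XA3(2) unfolding M2_def by blast
  have dj4: "Z \<inter> M1 = {}" using ZM(1) unfolding M1_def by blast
  have dj5: "Z \<inter> M2 = {}" using ZM(2) unfolding M2_def by blast
  have dj6: "M1 \<inter> M2 = {}" using M12 unfolding M1_def M2_def by blast
  note dj = dj1 dj2 dj3 dj4 dj5 dj6
  have cW: "card X + card Z + card M1 + card M2 \<le> card W"
  proof -
    have "card (X \<union> Z \<union> M1 \<union> M2) = card X + card Z + card M1 + card M2"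
    proof -
      have "card (X \<union> Z \<union> M1 \<union> M2) = card (X \<union> Z \<union> M1) + card M2"
        using dj fX fZ fM1 fM2 by (intro card_Un_disjoint) auto
      moreover have "card (X \<union> Z \<union> M1) = card (X \<union> Z) + card M1"
        using dj fX fZ fM1 fM2 by (intro card_Un_disjoint) auto
      moreover have "card (X \<union> Z) = card X + card Z"
        using dj fX fZ fM1 fM2 by (intro card_Un_disjoint) auto
      ultimately show ?thesis by simp
    qed
    moreover have "card (X \<union> Z \<union> M1 \<union> M2) \<le> card W"
      using XW ZW MW fW by (intro card_mono) auto
    ultimately show ?thesis by simp
  qed
  have fA3: "finite (FA (3*t) (2*t))" "finite (FB (3*t) (2*t))"
    using finite_subset[OF A3(1) fU3] finite_subset[OF A3(2) fU3] by auto
  have cA3: "2*t \<le> card (FA (3*t) (2*t))" "2*t \<le> card (FB (3*t) (2*t))"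
    using cardlow[OF FS, of "2*t" "3*t"] fA3 t1 by auto
  have cZ: "card X + 4*t \<le> card U3 + card Z"
  proof -
    have "card (FA (3*t) (2*t) \<union> FB (3*t) (2*t)) + card Z = card (FA (3*t) (2*t)) + card (FB (3*t) (2*t))"
      unfolding Z_def Zset_def using card_Un_Int[OF fA3(1) fA3(2)] by simp
    moreover have "card X + card (FA (3*t) (2*t) \<union> FB (3*t) (2*t)) = card (X \<union> (FA (3*t) (2*t) \<union> FB (3*t) (2*t)))"
    proof (rule card_Un_disjoint[symmetric])
      show "X \<inter> (FA (3*t) (2*t) \<union> FB (3*t) (2*t)) = {}" using XA3(1) XB3(1) by blast
    qed (use fX fA3 in auto)
    moreover have "card (X \<union> (FA (3*t) (2*t) \<union> FB (3*t) (2*t))) \<le> card U3"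
      using XU3 A3 by (intro card_mono[OF fU3]) blast
    ultimately show ?thesis using cA3 by linarith
  qed
  have fB2: "finite (Fupto FB (2*t))" "finite (Fupto FA (2*t))" using fU2 unfolding U2_def by auto
  have fA2: "finite (FA (2*t) t)" "finite (FB (2*t) t)"
    using finite_subset[OF AFu(1) fB2(2)] finite_subset[OF AFu(2) fB2(1)] by auto
  have sub22: "FA (2*t) (2*t) \<subseteq> Fupto FA (2*t)" "FB (2*t) (2*t) \<subseteq> Fupto FB (2*t)"
    using Fupto_sub[of "2*t" "2*t" "2*t" FA] Fupto_sub[of "2*t" "2*t" "2*t" FB] t1 by auto
  have fA22: "finite (FA (2*t) (2*t))" "finite (FB (2*t) (2*t))"
    using finite_subset[OF sub22(1) fB2(2)] finite_subset[OF sub22(2) fB2(1)] by auto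
  have cB2: "2*t \<le> card (Fupto FB (2*t))" "2*t \<le> card (Fupto FA (2*t))"
  proof -
    have "2*t \<le> card (FB (2*t) (2*t))" "2*t \<le> card (FA (2*t) (2*t))"
      using cardlow[OF FS, of "2*t" "2*t"] fA22 t1 by auto
    moreover have "card (FB (2*t) (2*t)) \<le> card (Fupto FB (2*t))" "card (FA (2*t) (2*t)) \<le> card (Fupto FA (2*t))"
      using card_mono[OF fB2(1) sub22(2)] card_mono[OF fB2(2) sub22(1)] by auto
    ultimately show "2*t \<le> card (Fupto FB (2*t))" "2*t \<le> card (Fupto FA (2*t))" by auto
  qed
  have cA2: "t \<le> card (FA (2*t) t)" "t \<le> card (FB (2*t) t)"
    using cardlow[OF FS, of t "2*t", OF _ _ fA2] t1 by auto
  have cM1: "3*t \<le> card M1 + card U2"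
  proof -
    have "card (FA (2*t) t \<union> Fupto FB (2*t)) + card M1 = card (FA (2*t) t) + card (Fupto FB (2*t))"
      unfolding M1_def using card_Un_Int[OF fA2(1) fB2(1)] by simp
    moreover have "card (FA (2*t) t \<union> Fupto FB (2*t)) \<le> card U2"
      using AFu fU2 unfolding U2_def by (intro card_mono) blast+
    ultimately show ?thesis using cA2 cB2 by linarith
  qed
  have cM2: "3*t \<le> card M2 + card U2"
  proof -
    have "card (FB (2*t) t \<union> Fupto FA (2*t)) + card M2 = card (FB (2*t) t) + card (Fupto FA (2*t))"
      unfolding M2_def using card_Un_Int[OF fA2(2) fB2(2)] by simp
    moreover have "card (FB (2*t) t \<union> Fupto FA (2*t)) \<le> card U2"
      using AFu fU2 unfolding U2_def by (intro card_mono) blast+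
    ultimately show ?thesis using cA2 cB2 by linarith
  qed
  have key: "2 * card X + 10*t \<le> card W + card U3 + 2 * card U2"
    using cW cZ cM1 cM2 by linarith
  hence "2 * real (card X) + 10 * real t \<le> real (card W) + real (card U3) + 2 * real (card U2)"
    by (metis (mono_tags, lifting) of_nat_add of_nat_le_iff of_nat_mult of_nat_numeral)
  with bU2 bU3 have "2 * real (card X) + (10 - 7*R) * real t - 3*lam \<le> real (card W)"
    by (simp add: algebra_simps)
  then show ?thesis unfolding W_def Z_def X_def h_def by simp
qed

end
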